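(* Let $n\ge1$, let $X_r\sim\mathrm{Beta}(1/2,1/2)$ and let $Y_r$ be the output of the binomial channel with $n$ trials and input $X_r$. Then \[ \mathbb E\!\left[\log\!\Big(nX_r(1-X_r)+\tfrac1{12}\Big)\right]=2\log\!\left(\frac{1+\sqrt{3n+1}}{4\sqrt3}\right), \] and the Shannon entropy of $Y_r$ satisfies \[ H(Y_r)\ \ge\ \log\frac{\pi}{4}+\psi(n+1), \] where $\psi$ is the digamma function.
   Context: All logarithms are natural. The binomial channel with $n$ trials has transition law $P_{Y|X}(y|x)=\binom{n}{y}x^y(1-x)^{n-y}$, $x\in[0,1]$, $y\in\{0,\dots,n\}$. $\mathrm{Beta}(1/2,1/2)$ has density $\frac{1}{\pi\sqrt{x(1-x)}}$ on $(0,1)$; the induced output pmf is $P_{Y_r}(y)=\frac{\Gamma(y+1/2)\Gamma(n-y+1/2)}{\pi\,\Gamma(y+1)\Gamma(n-y+1)}$. $H(Y)=-\sum_y P_Y(y)\log P_Y(y)$. *)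

theory Defs
  imports "HOL-Analysis.Analysis"
begin

definition arcsine_density :: "real \<Rightarrow> real" where
  "arcsine_density x = 1 / (pi * sqrt (x * (1 - x)))"

definition arcsine_expect :: "(real \<Rightarrow> real) \<Rightarrow> real" where
  "arcsine_expect g = (LBINT x:{0<..<1}. arcsine_density x * g x)"

text \<open>Output pmf of the binomial channel with n trials and input X_r ~ Beta(1/2,1/2).\<close>
definition P_Yr :: "nat \<Rightarrow> nat \<Rightarrow> real" where
  "P_Yr n y = Gamma (real y + 1/2) * Gamma (real n - real y + 1/2)
              / (pi * Gamma (real y + 1) * Gamma (real n - real y + 1))"

definition H_Yr :: "nat \<Rightarrow> real" where
  "H_Yr n = - (\<Sum>y\<in>{0..n}. P_Yr n y * ln (P_Yr n y))"

end

theory Submission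
  imports Defs "HOL-Complex_Analysis.Complex_Analysis"
begin


lemma Gp1: "x > 0 \<Longrightarrow> Gamma (x + 1 :: real) = x * Gamma x"
  by (rule Gamma_plus1) (auto elim!: nonpos_Ints_cases)

lemma alg1: fixes a b c d k m p :: real
  assumes "c \<noteq> 0" "d \<noteq> 0" "k \<noteq> 0" "p \<noteq> 0"
  shows "a * (m * b) / (p * c * (k * d)) * k = a * b / (p * c * d) * m"
  using assms by (simp add: field_simps)

lemma alg2: fixes a b c d k m p :: real
  assumes "c \<noteq> 0" "d \<noteq> 0" "k \<noteq> 0" "p \<noteq> 0"
  shows "(m * a) * b / (p * (k * c) * d) * k = a * b / (p * c * d) * m"
  using assms by (simp add: field_simps)

lemma ln4: fixes A B C D p :: real
  assumes "A > 0" "B > 0" "C > 0" "D > 0" "p > 0"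
  shows "- ln (A * B / (p * C * D)) = ln p + (ln C - ln A) + (ln D - ln B)"
  using assms by (simp add: ln_div ln_mult)

lemma Q_pos: "y \<le> n \<Longrightarrow> P_Yr n y > 0"
  unfolding P_Yr_def by (intro divide_pos_pos mult_pos_pos Gamma_real_pos) auto

lemma Q_a: assumes "y \<le> n"
  shows "P_Yr (Suc n) y * (real n + 1 - real y) = P_Yr n y * (real n - real y + 1/2)"
proof -
  have g1: "Gamma (real (Suc n) - real y + 1/2) = (real n - real y + 1/2) * Gamma (real n - real y + 1/2)"
    using Gp1[of "real n - real y + 1/2"] assms by (simp add: add_ac)
  have g2: "Gamma (real (Suc n) - real y + 1) = (real n - real y + 1) * Gamma (real n - real y + 1)"
    using Gp1[of "real n - real y + 1"] assms by (simp add: add_ac)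
  have p: "Gamma (real y + 1) \<noteq> 0" "Gamma (real n - real y + 1) \<noteq> 0" "real n - real y + 1 \<noteq> 0" "pi \<noteq> 0"
  proof -
    have "Gamma (real y + 1) > 0" "Gamma (real n - real y + 1) > 0" using assms by (intro Gamma_real_pos; simp)+
    then show "Gamma (real y + 1) \<noteq> 0" "Gamma (real n - real y + 1) \<noteq> 0" by (metis order_less_irrefl)+
  qed (use assms in auto)
  have e: "real n + 1 - real y = real n - real y + 1" by simp
  show ?thesis unfolding P_Yr_def g1 g2 e
    by (rule alg1[OF p])
qed

lemma Q_b: assumes "y \<le> n"
  shows "P_Yr (Suc n) (Suc y) * (real y + 1) = P_Yr n y * (real y + 1/2)"
proof -
  have g1: "Gamma (real (Suc y) + 1/2) = (real y + 1/2) * Gamma (real y + 1/2)"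
    using Gp1[of "real y + 1/2"] assms by (simp add: add_ac)
  have g2: "Gamma (real (Suc y) + 1) = (real y + 1) * Gamma (real y + 1)"
    using Gp1[of "real y + 1"] assms by (simp add: add_ac)
  have e1: "real (Suc n) - real (Suc y) = real n - real y" by simp
  have p: "Gamma (real y + 1) \<noteq> 0" "Gamma (real n - real y + 1) \<noteq> 0" "real y + 1 \<noteq> 0" "pi \<noteq> 0"
  proof -
    have "Gamma (real y + 1) > 0" "Gamma (real n - real y + 1) > 0" using assms by (intro Gamma_real_pos; simp)+
    then show "Gamma (real y + 1) \<noteq> 0" "Gamma (real n - real y + 1) \<noteq> 0" by (metis order_less_irrefl)+
  qed (use assms in auto)
  show ?thesis unfolding P_Yr_def g1 g2 e1
    by (rule alg2[OF p])
qed

lemma Q_rec: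
  "(\<Sum>y\<in>{0..Suc n}. P_Yr (Suc n) y * f y) * (real n + 1) =
   (\<Sum>y\<in>{0..n}. P_Yr n y * ((real n - real y + 1/2) * f y + (real y + 1/2) * f (Suc y)))"
proof -
  have "(\<Sum>y\<in>{0..Suc n}. P_Yr (Suc n) y * f y) * (real n + 1) =
     (\<Sum>y\<in>{0..Suc n}. P_Yr (Suc n) y * (real n + 1 - real y) * f y) +
     (\<Sum>y\<in>{0..Suc n}. P_Yr (Suc n) y * real y * f y)"
    by (simp only: sum_distrib_right sum.distrib[symmetric]) (rule sum.cong; simp add: algebra_simps)
  also have "(\<Sum>y\<in>{0..Suc n}. P_Yr (Suc n) y * (real n + 1 - real y) * f y) =
      (\<Sum>y\<in>{0..n}. P_Yr n y * (real n - real y + 1/2) * f y)"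
  proof -
    have "\<And>y. y \<in> {0..n} \<Longrightarrow> P_Yr (Suc n) y * (real n + 1 - real y) * f y = P_Yr n y * (real n - real y + 1/2) * f y"
      using Q_a by simp
    then have "(\<Sum>y\<in>{0..n}. P_Yr (Suc n) y * (real n + 1 - real y) * f y) = (\<Sum>y\<in>{0..n}. P_Yr n y * (real n - real y + 1/2) * f y)"
      by (rule sum.cong[OF refl])
    then show ?thesis by (simp add: sum.atLeast0_atMost_Suc)
  qed
  also have "(\<Sum>y\<in>{0..Suc n}. P_Yr (Suc n) y * real y * f y) =
      (\<Sum>y\<in>{0..n}. P_Yr n y * (real y + 1/2) * f (Suc y))"
  proof -
    have "\<And>y. y \<in> {0..n} \<Longrightarrow> P_Yr (Suc n) (Suc y) * real (Suc y) * f (Suc y) = P_Yr n y * (real y + 1/2) * f (Suc y)"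
      using Q_b by (simp add: add_ac)
    then have "(\<Sum>y\<in>{0..n}. P_Yr (Suc n) (Suc y) * real (Suc y) * f (Suc y)) = (\<Sum>y\<in>{0..n}. P_Yr n y * (real y + 1/2) * f (Suc y))"
      by (rule sum.cong[OF refl])
    then show ?thesis by (simp only: sum.atLeast0_atMost_Suc_shift) simp
  qed
  finally show ?thesis by (simp add: sum.distrib[symmetric] algebra_simps)
qed

lemma Q_sum1: "(\<Sum>y\<in>{0..n}. P_Yr n y) = 1"
proof (induction n)
  case 0
  show ?case by (simp add: P_Yr_def Gamma_one_half_real)
next
  case (Suc n)
  have "(\<Sum>y\<in>{0..Suc n}. P_Yr (Suc n) y * 1) * (real n + 1) = (real n + 1)"
    unfolding Q_rec using Suc by (simp add: algebra_simps sum.distrib flip: sum_distrib_left)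
  then show ?case by simp
qed

lemma Q_dig: "(\<Sum>y\<in>{0..n}. P_Yr n y * Digamma (real y + 1/2)) = Digamma (real n + 1) - 2 * ln 2"
proof (induction n)
  case 0
  show ?case by (simp add: P_Yr_def Gamma_one_half_real Digamma_one_half)
next
  case (Suc n)
  have d: "Digamma (real (Suc y) + 1/2) = Digamma (real y + 1/2) + 1 / (real y + 1/2)" for y
    using Digamma_plus1[of "real y + 1/2"] by (simp add: add_ac)
  have "(\<Sum>y\<in>{0..Suc n}. P_Yr (Suc n) y * Digamma (real y + 1/2)) * (real n + 1)
     = (\<Sum>y\<in>{0..n}. P_Yr n y * ((real n + 1) * Digamma (real y + 1/2) + 1))"
    unfolding Q_rec d by (intro sum.cong refl) (simp add: field_simps)
  also have "\<dots> = (real n + 1) * (\<Sum>y\<in>{0..n}. P_Yr n y * Digamma (real y + 1/2)) + 1"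
    using Q_sum1[of n] by (simp add: algebra_simps sum.distrib sum_distrib_left)
  finally have "(\<Sum>y\<in>{0..Suc n}. P_Yr (Suc n) y * Digamma (real y + 1/2)) =
      (\<Sum>y\<in>{0..n}. P_Yr n y * Digamma (real y + 1/2)) + 1 / (real n + 1)"
    by (simp add: field_simps)
  moreover have "Digamma (real (Suc n) + 1) = Digamma (real n + 1) + 1 / (real n + 1)"
    using Digamma_plus1[of "real n + 1"] by (simp add: add_ac)
  ultimately show ?case using Suc by simp
qed

lemma lnG: fixes a :: real assumes "a > 0"
  shows "ln (Gamma (a + 1/2)) - ln (Gamma a) \<ge> Digamma a / 2"
proof -
  obtain z where z: "a < z" "z < a + 1/2" "ln_Gamma (a + 1/2) - ln_Gamma a = (a + 1/2 - a) * Digamma z"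
  proof -
    have "\<exists>z. a < z \<and> z < a + 1/2 \<and> ln_Gamma (a + 1/2) - ln_Gamma a = (a + 1/2 - a) * Digamma z"
      by (rule MVT2) (use assms in \<open>auto intro!: has_field_derivative_ln_Gamma_real\<close>)
    then show ?thesis using that by blast
  qed
  have "Digamma a \<le> Digamma z" using z assms by (intro Digamma_real_mono) auto
  moreover have "ln_Gamma (a + 1/2) = ln (Gamma (a + 1/2))" "ln_Gamma a = ln (Gamma a)"
    using assms by (simp_all add: ln_Gamma_real_pos)
  ultimately show ?thesis using z by simp
qed

lemma Q_sym: "y \<le> n \<Longrightarrow> P_Yr n (n - y) = P_Yr n y"
  unfolding P_Yr_def by (simp add: of_nat_diff mult_ac)

lemma Q_dig2: "(\<Sum>y\<in>{0..n}. P_Yr n y * Digamma (real n - real y + 1/2)) = Digamma (real n + 1) - 2 * ln 2"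
proof -
  have "(\<Sum>y\<in>{0..n}. P_Yr n y * Digamma (real n - real y + 1/2)) =
        (\<Sum>y\<in>{0..n}. P_Yr n (n - y) * Digamma (real n - real (n - y) + 1/2))"
    by (subst sum.atLeastAtMost_rev) simp
  also have "\<dots> = (\<Sum>y\<in>{0..n}. P_Yr n y * Digamma (real y + 1/2))"
    by (intro sum.cong refl) (simp add: Q_sym of_nat_diff)
  finally show ?thesis using Q_dig by simp
qed

lemma H_bound: "H_Yr n \<ge> ln (pi / 4) + Digamma (real n + 1)"
proof -
  have tm: "- ln (P_Yr n y) \<ge> ln pi + Digamma (real y + 1/2) / 2 + Digamma (real n - real y + 1/2) / 2"
    if "y \<le> n" for y
  proof -
    have pos: "Gamma (real y + 1/2) > 0" "Gamma (real n - real y + 1/2) > 0"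
      "Gamma (real y + 1) > 0" "Gamma (real n - real y + 1) > 0" using that by (intro Gamma_real_pos; simp)+
    have "- ln (P_Yr n y) = ln pi + (ln (Gamma (real y + 1/2 + 1/2)) - ln (Gamma (real y + 1/2)))
        + (ln (Gamma (real n - real y + 1/2 + 1/2)) - ln (Gamma (real n - real y + 1/2)))"
      unfolding P_Yr_def using ln4[OF pos(1,2,3,4) pi_gt_zero] by (simp add: add_ac)
    moreover have "ln (Gamma (real y + 1/2 + 1/2)) - ln (Gamma (real y + 1/2)) \<ge> Digamma (real y + 1/2) / 2"
      by (rule lnG) simp
    moreover have "ln (Gamma (real n - real y + 1/2 + 1/2)) - ln (Gamma (real n - real y + 1/2)) \<ge> Digamma (real n - real y + 1/2) / 2"
      by (rule lnG) (use that in simp)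
    ultimately show ?thesis by linarith
  qed
  have "H_Yr n = (\<Sum>y\<in>{0..n}. P_Yr n y * (- ln (P_Yr n y)))"
    unfolding H_Yr_def by (simp add: sum_negf)
  also have "\<dots> \<ge> (\<Sum>y\<in>{0..n}. P_Yr n y * (ln pi + Digamma (real y + 1/2) / 2 + Digamma (real n - real y + 1/2) / 2))"
    by (intro sum_mono mult_left_mono tm) (auto intro: less_imp_le Q_pos)
  moreover have "(\<Sum>y\<in>{0..n}. P_Yr n y * (ln pi + Digamma (real y + 1/2) / 2 + Digamma (real n - real y + 1/2) / 2))
      = ln pi * (\<Sum>y\<in>{0..n}. P_Yr n y) + (\<Sum>y\<in>{0..n}. P_Yr n y * Digamma (real y + 1/2)) / 2
        + (\<Sum>y\<in>{0..n}. P_Yr n y * Digamma (real n - real y + 1/2)) / 2"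
    by (simp add: algebra_simps sum.distrib sum_distrib_left sum_divide_distrib)
  ultimately have "H_Yr n \<ge> ln pi + Digamma (real n + 1) - 2 * ln 2"
    unfolding Q_sum1 Q_dig Q_dig2 by simp
  moreover have "ln (pi / 4) = ln pi - 2 * ln 2"
    using ln_div[of pi 4] ln_realpow[of 2 2] by simp
  ultimately show ?thesis by simp
qed



lemma Re_pos_aux: fixes r :: real assumes "0 \<le> r" "r < 1" "cmod z \<le> 1"
  shows "Re (1 - of_real r * z) > 0"
proof -
  have "Re (of_real r * z) = r * Re z" by simp
  also have "\<dots> \<le> r * cmod z" using assms by (intro mult_left_mono) (auto simp: complex_Re_le_cmod)
  also have "\<dots> \<le> r" using assms by (simp add: mult_left_le)
  finally show ?thesis using assms by simp
qed

lemma cmod_aux: fixes r x :: real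
  shows "(cmod (1 - of_real r * exp (2 * of_real pi * \<i> * of_real x)))^2 = 1 - 2*r*cos(2*pi*x) + r^2"
proof -
  have e: "exp (2 * of_real pi * \<i> * of_real x) = cis (2*pi*x)"
    by (simp add: cis_conv_exp mult_ac)
  have "(cmod (1 - of_real r * cis (2*pi*x)))^2 = (1 - r * cos(2*pi*x))^2 + (r * sin (2*pi*x))^2"
    unfolding cmod_power2 by simp
  also have "\<dots> = 1 - 2*r*cos(2*pi*x) + r^2"
    using sin_cos_squared_add[of "2*pi*x"] by algebra
  finally show ?thesis unfolding e .
qed

lemma log_circle: fixes r :: real assumes r: "0 \<le> r" "r < 1"
  shows "((\<lambda>t. ln (1 - 2*r*cos(2*pi*t) + r^2)) has_integral 0) {0..1}"
proof -
  define f where "f z = Ln (1 - of_real r * z)" for z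
  have nn: "1 - of_real r * z \<notin> \<real>\<^sub>\<le>\<^sub>0" if "cmod z \<le> 1" for z
    using Re_pos_aux[OF r that] by (auto simp: complex_nonpos_Reals_iff)
  have cont: "continuous_on (cball 0 1) f"
    unfolding f_def by (intro continuous_intros) (use nn in auto)
  have hol: "f holomorphic_on (ball 0 1)"
    unfolding f_def by (intro holomorphic_intros) (use nn in auto)
  have "((\<lambda>u. f u / (u - 0)) has_contour_integral (2 * of_real pi * \<i> * f 0)) (circlepath 0 1)"
    by (rule Cauchy_integral_circlepath[OF cont hol]) simp
  then have "((\<lambda>x. f (circlepath 0 1 x) / (circlepath 0 1 x - 0) * vector_derivative (circlepath 0 1) (at x within {0..1})) has_integral 0) {0..1}"
    by (simp add: has_contour_integral_def f_def)
  then have "((\<lambda>x. (2 * of_real pi * \<i>) * f (exp (2 * of_real pi * \<i> * of_real x))) has_integral 0) {0..1}"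
  proof (rule has_integral_cong[THEN iffD1, rotated])
    fix x :: real assume "x \<in> {0..1}"
    then have vd: "vector_derivative (circlepath 0 1) (at x within {0..1}) = 2 * pi * \<i> * exp(2 * of_real pi * \<i> * x)"
      using vector_derivative_circlepath01[of x 0 1] by simp
    show "f (circlepath 0 1 x) / (circlepath 0 1 x - 0) * vector_derivative (circlepath 0 1) (at x within {0..1}) =
      (2 * of_real pi * \<i>) * f (exp (2 * of_real pi * \<i> * of_real x))"
      unfolding vd by (simp add: circlepath)
  qed
  then have "((\<lambda>x. f (exp (2 * of_real pi * \<i> * of_real x))) has_integral (0 / (2 * of_real pi * \<i>))) {0..1}"
    by (subst (asm) has_integral_mult_right_iff) auto
  then have "((\<lambda>x. f (exp (2 * of_real pi * \<i> * of_real x))) has_integral 0) {0..1}"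
    by simp
  from has_integral_linear[OF this bounded_linear_Re]
  have "((\<lambda>x. Re (f (exp (2 * of_real pi * \<i> * of_real x)))) has_integral 0) {0..1}"
    by (simp add: o_def)
  then have "((\<lambda>x. 2 * Re (f (exp (2 * of_real pi * \<i> * of_real x)))) has_integral 0) {0..1}"
    using has_integral_mult_right[of _ 0 "{0..1}" "2::real"] by simp
  moreover have "2 * Re (f (exp (2 * of_real pi * \<i> * of_real x))) = ln (1 - 2*r*cos(2*pi*x) + r^2)" for x :: real
  proof -
    define w where "w = 1 - of_real r * exp (2 * of_real pi * \<i> * of_real x)"
    have "Re w > 0" unfolding w_def by (rule Re_pos_aux[OF r]) (simp add: norm_exp_eq_Re)
    then have w0: "w \<noteq> 0" by auto
    have "(cmod w)^2 = 1 - 2*r*cos(2*pi*x) + r^2"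
      unfolding w_def by (rule cmod_aux)
    then have "ln (1 - 2*r*cos(2*pi*x) + r^2) = 2 * ln (cmod w)"
      using w0 ln_realpow[of "cmod w" 2] by simp
    then show ?thesis using w0 by (simp add: f_def w_def[symmetric])
  qed
  ultimately show ?thesis by simp
qed



lemma dens_int: "set_integrable lborel {0<..<1::real} arcsine_density"
proof -
  define F where "F x = arcsin (2*x - 1) / pi" for x :: real
  have contF: "continuous_on {0..1} F"
    unfolding F_def by (intro continuous_intros) auto
  have "set_integrable lborel (einterval (ereal 0) (ereal 1)) arcsine_density"
  proof (rule interval_integral_FTC_nonneg(1)[where F = F and A = "F 0" and B = "F 1"])
    fix x assume x: "ereal 0 < ereal x" "ereal x < ereal 1"
    then have x': "0 < x" "x < 1" by auto
    have e: "1 - (2*x - 1)^2 = 4 * (x * (1 - x))" by (simp add: power2_eq_square algebra_simps)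
    have "sqrt (4 * (x * (1 - x))) = 2 * sqrt (x * (1 - x))"
      by (simp add: real_sqrt_mult)
    then have "inverse (sqrt (1 - (2*x - 1)^2)) * 2 / pi = arcsine_density x"
      unfolding e arcsine_density_def by (simp add: field_simps)
    moreover have "(F has_real_derivative inverse (sqrt (1 - (2*x - 1)^2)) * 2 / pi) (at x)"
      unfolding F_def using x'
      by (auto intro!: derivative_eq_intros DERIV_arcsin[THEN DERIV_chain2])
    ultimately show "(F has_real_derivative arcsine_density x) (at x)" by simp
    have "x * (1 - x) > 0" using x' by simp
    then show "isCont arcsine_density x"
      unfolding arcsine_density_def by (intro continuous_intros) auto
  next
    show "AE x in lborel. ereal 0 < ereal x \<longrightarrow> ereal x < ereal 1 \<longrightarrow> 0 \<le> arcsine_density x"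
      by (intro AE_I2) (auto simp: arcsine_density_def)
    show "((F \<circ> real_of_ereal) \<longlongrightarrow> F 0) (at_right (ereal 0))"
      unfolding ereal_tendsto_simps using continuous_on_Icc_at_rightD[OF contF] by simp
    show "((F \<circ> real_of_ereal) \<longlongrightarrow> F 1) (at_left (ereal 1))"
      unfolding ereal_tendsto_simps using continuous_on_Icc_at_leftD[OF contF] by simp
  qed simp
  then show ?thesis by simp
qed

lemma f_int: fixes n :: nat
  shows "set_integrable lborel {0<..<1::real} (\<lambda>x. arcsine_density x * ln (real n * x * (1 - x) + 1/12))"
proof (rule set_integrable_bound[where f = "\<lambda>x. (ln 12 + ln (real n + 1)) * arcsine_density x"])
  show "set_integrable lborel {0<..<1::real} (\<lambda>x. (ln 12 + ln (real n + 1)) * arcsine_density x)"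
    using dens_int by simp
  show "set_borel_measurable lborel {0<..<1} (\<lambda>x. arcsine_density x * ln (real n * x * (1 - x) + 1/12))"
    unfolding set_borel_measurable_def arcsine_density_def by measurable
  show "AE x in lborel. x \<in> {0<..<1} \<longrightarrow> norm (arcsine_density x * ln (real n * x * (1 - x) + 1/12))
           \<le> norm ((ln 12 + ln (real n + 1)) * arcsine_density x)"
  proof (intro AE_I2 impI)
    fix x :: real assume x: "x \<in> {0<..<1}"
    have d: "arcsine_density x > 0" using x by (simp add: arcsine_density_def)
    have p: "x * (1 - x) \<ge> 0" "x * (1 - x) \<le> 1" using x by (auto simp: mult_le_one)
    have y1: "real n * x * (1 - x) + 1/12 \<ge> 1/12" using p by (simp add: mult.assoc)
    have y2: "real n * x * (1 - x) + 1/12 \<le> real n + 1"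
      using mult_left_mono[OF p(2), of "real n"] by (simp add: mult.assoc)
    have l1: "ln (real n * x * (1 - x) + 1/12) \<ge> - ln 12"
      using ln_le_cancel_iff[of "1/12" "real n * x * (1 - x) + 1/12"] y1 by (simp add: ln_div)
    have l2: "ln (real n * x * (1 - x) + 1/12) \<le> ln (real n + 1)"
      using y1 y2 by (subst ln_le_cancel_iff) auto
    have z: "ln (real n + 1) \<ge> 0" "ln (12::real) \<ge> 0" by simp_all
    have "\<bar>ln (real n * x * (1 - x) + 1/12)\<bar> \<le> ln 12 + ln (real n + 1)"
      using l1 l2 z unfolding abs_le_iff by linarith
    moreover have "ln 12 + ln (real n + 1) \<ge> 0" by simp
    ultimately show "norm (arcsine_density x * ln (real n * x * (1 - x) + 1/12))
           \<le> norm ((ln 12 + ln (real n + 1)) * arcsine_density x)"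
      using d by (simp add: abs_mult mult.commute mult_left_mono)
  qed
qed

lemma key_id: fixes n :: nat and t :: real
  defines "s \<equiv> sqrt (3 * real n + 1)"
  defines "c \<equiv> (1 + s)^2 / 48" and "r \<equiv> (s - 1) / (s + 1)"
  shows "real n * (sin (pi * t))^2 / 4 + 1/12 = c * (1 - 2*r*cos(2*pi*t) + r^2)"
proof -
  have s1: "s \<ge> 1" unfolding s_def by simp
  have s2: "s^2 = 3 * real n + 1" unfolding s_def by simp
  have a: "c * (1 - r)^2 = 1/12"
  proof -
    have r1: "1 - r = 2 / (s + 1)" unfolding r_def using s1 by (simp add: field_simps)
    have "(1 + s)^2 / 48 * (2 / (s + 1))^2 = 1/12"
      using s1 by (simp add: power_divide add.commute)
    then show ?thesis unfolding r1 c_def .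
  qed
  have b: "4 * c * r = real n / 4"
  proof -
    have "4 * c * r = (s^2 - 1) / 12"
      unfolding c_def r_def using s1 mult_nonneg_nonneg[of s "s*48"] by (auto simp: field_simps power2_eq_square)
    then show ?thesis using s2 by simp
  qed
  have cs: "cos (2*pi*t) = 1 - 2 * (sin (pi * t))^2"
    using cos_double_sin[of "pi * t"] by (simp add: mult.assoc)
  show ?thesis unfolding cs using a b by algebra
qed

lemma sub_pt: fixes n :: nat and t :: real
  assumes t: "0 < t" "t < 1"
  shows "(pi/2 * sin (pi * t)) *\<^sub>R (arcsine_density ((1 - cos (pi * t)) / 2) *
           ln (real n * ((1 - cos (pi * t)) / 2) * (1 - (1 - cos (pi * t)) / 2) + 1/12))
         = ln (real n * (sin (pi * t))^2 / 4 + 1/12)"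
proof -
  have sp: "sin (pi * t) > 0" using t by (intro sin_gt_zero) auto
  have e: "((1 - cos (pi * t)) / 2) * (1 - (1 - cos (pi * t)) / 2) = (sin (pi * t))^2 / 4"
  proof -
    have "((1 - cos (pi * t)) / 2) * (1 - (1 - cos (pi * t)) / 2) = (1 - (cos (pi * t))^2) / 4"
      by (simp add: field_simps power2_eq_square)
    then show ?thesis by (simp add: sin_squared_eq)
  qed
  have sq: "sqrt ((sin (pi * t))^2 / 4) = sin (pi * t) / 2"
    using sp by (simp add: real_sqrt_divide)
  have "(pi/2 * sin (pi * t)) * arcsine_density ((1 - cos (pi * t)) / 2) = 1"
    unfolding arcsine_density_def e sq using sp by simp
  moreover have "real n * ((1 - cos (pi * t)) / 2) * (1 - (1 - cos (pi * t)) / 2) = real n * (sin (pi * t))^2 / 4"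
    using e by (simp add: mult.assoc)
  ultimately show ?thesis
    by (metis (no_types, lifting) mult.assoc mult_1 real_scaleR_def)
qed

lemma expect_val: fixes n :: nat
  shows "arcsine_expect (\<lambda>x. ln (real n * x * (1 - x) + 1/12))
           = 2 * ln ((1 + sqrt (3 * real n + 1)) / (4 * sqrt 3))"
proof -
  define f where "f x = arcsine_density x * ln (real n * x * (1 - x) + 1/12)" for x
  define g where "g t = (1 - cos (pi * t)) / 2" for t :: real
  define g' where "g' t = pi/2 * sin (pi * t)" for t :: real
  define k where "k t = ln (real n * (sin (pi * t))^2 / 4 + 1/12)" for t :: real
  define s where "s = sqrt (3 * real n + 1)"
  define c where "c = (1 + s)^2 / 48"
  define r where "r = (s - 1) / (s + 1)"
  have s1: "s \<ge> 1" unfolding s_def by simp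
  have r01: "0 \<le> r" "r < 1" unfolding r_def using s1 by auto
  have cpos: "c > 0" unfolding c_def using s1 by simp
  have kpos: "real n * (sin (pi * t))^2 / 4 + 1/12 > 0" for t
    by (intro add_nonneg_pos) auto
  have contk: "continuous_on {0..1} k"
    unfolding k_def using kpos by (intro continuous_intros) (simp, metis less_irrefl)
  have kint: "set_integrable lborel {0..1} k"
    by (rule borel_integrable_atLeastAtMost'[OF contk])
  have eqk: "g' t *\<^sub>R f (g t) = k t" if "0 < t" "t < 1" for t
    unfolding g'_def f_def g_def k_def using sub_pt[OF that, of n] by simp
  have int1: "set_integrable lborel (einterval (ereal 0) (ereal 1)) (\<lambda>t. g' t *\<^sub>R f (g t))"
  proof -
    have "set_integrable lborel {0<..<1} k"
      by (rule set_integrable_subset[OF kint]) auto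
    then show ?thesis
      by (subst set_integrable_cong[OF refl refl, where f' = k]) (auto simp: eqk simp del: real_scaleR_def)
  qed
  have int2: "set_integrable lborel (einterval (ereal 0) (ereal 1)) f"
    using f_int[of n] by (simp add: f_def[abs_def])
  have sub: "(LBINT x=ereal 0..ereal 1. f x) = (LBINT t=ereal 0..ereal 1. g' t *\<^sub>R f (g t))"
  proof (rule interval_integral_substitution_integrable[OF _ _ _ _ _ _ _ int1 int2])
    fix x assume x: "ereal 0 < ereal x" "ereal x < ereal 1"
    then have x': "0 < x" "x < 1" by auto
    show "(g has_real_derivative g' x) (at x)"
      unfolding g_def g'_def by (auto intro!: derivative_eq_intros)
    show "isCont g' x" unfolding g'_def by (intro continuous_intros)
    have gx: "0 < g x" "g x < 1"
    proof -
      have "cos (pi * x) < 1" "cos (pi * x) > -1"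
        using x' cos_monotone_0_pi[of 0 "pi * x"] cos_monotone_0_pi[of "pi * x" pi] by auto
      then show "0 < g x" "g x < 1" unfolding g_def by auto
    qed
    then have p1: "g x * (1 - g x) > 0" by simp
    have p2: "real n * g x * (1 - g x) + 1/12 > 0"
      using p1 by (intro add_nonneg_pos) (auto simp: mult.assoc)
    show "isCont f (g x)"
      unfolding f_def arcsine_density_def using p1 p2 by (intro continuous_intros) auto
  next
    fix x assume x: "ereal 0 \<le> ereal x" "ereal x \<le> ereal 1"
    then have "0 \<le> sin (pi * x)" by (intro sin_ge_zero) auto
    then show "0 \<le> g' x" unfolding g'_def by simp
  next
    have "(g \<longlongrightarrow> g 0) (at_right 0)" unfolding g_def by (intro tendsto_intros) auto
    then show "((ereal \<circ> g \<circ> real_of_ereal) \<longlongrightarrow> ereal 0) (at_right (ereal 0))"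
      unfolding ereal_tendsto_simps by (simp add: g_def)
    have "(g \<longlongrightarrow> g 1) (at_left 1)" unfolding g_def by (intro tendsto_intros) auto
    then show "((ereal \<circ> g \<circ> real_of_ereal) \<longlongrightarrow> ereal 1) (at_left (ereal 1))"
      unfolding ereal_tendsto_simps by (simp add: g_def)
  qed simp
  have "arcsine_expect (\<lambda>x. ln (real n * x * (1 - x) + 1/12)) = (LBINT x=ereal 0..ereal 1. f x)"
    unfolding arcsine_expect_def f_def by (simp add: interval_integral_Ioo)
  also note sub
  also have "(LBINT t=ereal 0..ereal 1. g' t *\<^sub>R f (g t)) = (LBINT t=ereal 0..ereal 1. k t)"
    by (simp add: interval_integral_Ioo del: real_scaleR_def) (rule set_lebesgue_integral_cong; simp add: eqk del: real_scaleR_def)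
  also have "\<dots> = integral {0..1} k"
    using interval_integral_eq_integral[OF _ kint] by simp
  also have "\<dots> = ln c"
  proof -
    have pos: "1 - 2*r*cos(2*pi*t) + r^2 > 0" for t
    proof -
      have "r * cos (2*pi*t) \<le> r" using r01 by (simp add: mult_left_le)
      moreover have "(1 - r)^2 > 0" using r01 by simp
      ultimately show ?thesis by (simp add: power2_eq_square algebra_simps)
    qed
    have kk: "k t = ln c + ln (1 - 2*r*cos(2*pi*t) + r^2)" for t
      unfolding k_def key_id[of n t] c_def[symmetric] r_def[symmetric] s_def[symmetric]
      using cpos pos[of t] by (simp add: ln_mult)
    moreover have "((\<lambda>t. ln c + ln (1 - 2*r*cos(2*pi*t) + r^2)) has_integral (ln c + 0)) {0..1}"
      using has_integral_add[OF has_integral_const_real[of "ln c" 0 1] log_circle[OF r01]] by simp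
    moreover have "k = (\<lambda>t. ln c + ln (1 - 2*r*cos(2*pi*t) + r^2))" using kk by (rule ext)
    ultimately show ?thesis using integral_unique by simp
  qed
  also have "ln c = 2 * ln ((1 + s) / (4 * sqrt 3))"
  proof -
    have "c = ((1 + s) / (4 * sqrt 3))^2" unfolding c_def by (simp add: power_divide power_mult_distrib)
    then show ?thesis using s1 by (simp add: ln_realpow)
  qed
  finally show ?thesis unfolding s_def .
qed


theorem mainTheorem15:
  fixes n :: nat
  assumes "n \<ge> 1"
  shows "set_integrable lborel {0<..<1::real}
           (\<lambda>x. arcsine_density x * ln (real n * x * (1 - x) + 1/12))
       \<and> arcsine_expect (\<lambda>x. ln (real n * x * (1 - x) + 1/12))
           = 2 * ln ((1 + sqrt (3 * real n + 1)) / (4 * sqrt 3))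
       \<and> H_Yr n \<ge> ln (pi / 4) + Digamma (real n + 1)"
  using f_int[of n] expect_val[of n] H_bound[of n] by blast

end
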